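(* Let $H$ be a real Hilbert space and $A:H\to2^H$ a maximally monotone operator with $zer(A)\neq\emptyset$. Let $\varphi:[0,\infty)\to[0,\infty)$ be an increasing function vanishing only at $0$, and $(\gamma_n)$ a sequence in $(0,\infty)$ with $\sum_{n=0}^\infty\gamma_n^2=\infty$ having rate of divergence $\theta$. Let $b\in\mathbb{N}$, $p\in zer(A)$ and $C$ the closed ball of center $p$ and radius $b$. Suppose $A$ is uniformly monotone on $C$ with modulus $\varphi$. For $x\in C$ let $x_0:=x$ and $x_{n+1}:=J_{\gamma_nA}x_n$. Then $p$ is the unique zero of $A$ in $C$ and $(x_n)$ converges strongly to $p$ with rate of convergence $$\Psi_{b,\theta,\varphi}(k):=\theta\left(b^2\left(\left\lceil\frac{2b}{\varphi\left(\frac1{k+1}\right)}\right\rceil+1\right)^2\right)+1.$$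
   Context: $zer(A)=\{x:0\in A(x)\}$; $J_{\gamma A}:=(id_H+\gamma A)^{-1}$. $A$ is uniformly monotone on $C$ with modulus $\varphi$ if for all $x,y\in C$, $u\in A(x)$, $v\in A(y)$: $\langle x-y,u-v\rangle\ge\varphi(\|x-y\|)$. A rate of divergence for $\sum\gamma_n^2=\infty$ is $\theta:\mathbb{N}\to\mathbb{N}$ with $\sum_{n=0}^{\theta(K)}\gamma_n^2\ge K$ for all $K$. A rate of convergence of $a_n\to a$ is $\Phi$ with $\|a_n-a\|\le\frac1{k+1}$ for all $k$ and $n\ge\Phi(k)$. *)

theory Defs
  imports "HOL-Analysis.Analysis"
begin

definition monotone_op :: "('a::real_inner \<Rightarrow> 'a set) \<Rightarrow> bool" where
  "monotone_op A \<longleftrightarrow>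
     (\<forall>x y u v. u \<in> A x \<longrightarrow> v \<in> A y \<longrightarrow> inner (x - y) (u - v) \<ge> 0)"

definition maximally_monotone :: "('a::real_inner \<Rightarrow> 'a set) \<Rightarrow> bool" where
  "maximally_monotone A \<longleftrightarrow> monotone_op A \<and>
     (\<forall>B. monotone_op B \<and> (\<forall>x. A x \<subseteq> B x) \<longrightarrow> B = A)"

definition zer :: "('a::real_vector \<Rightarrow> 'a set) \<Rightarrow> 'a set" where
  "zer A = {x. 0 \<in> A x}"

text \<open>Resolvent J_{gamma A} = (id + gamma A)^{-1}, as a set-valued map:
  y \<in> J x iff x \<in> y + gamma A(y).\<close>
definition resolvent :: "real \<Rightarrow> ('a::real_vector \<Rightarrow> 'a set) \<Rightarrow> 'a \<Rightarrow> 'a set" where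
  "resolvent \<gamma> A x = {y. \<exists>u \<in> A y. x = y + \<gamma> *\<^sub>R u}"

definition uniformly_monotone_on ::
    "'a set \<Rightarrow> ('a::real_inner \<Rightarrow> 'a set) \<Rightarrow> (real \<Rightarrow> real) \<Rightarrow> bool" where
  "uniformly_monotone_on C A \<phi> \<longleftrightarrow>
     (\<forall>x\<in>C. \<forall>y\<in>C. \<forall>u\<in>A x. \<forall>v\<in>A y. inner (x - y) (u - v) \<ge> \<phi> (norm (x - y)))"

definition rate_of_divergence_sq :: "(nat \<Rightarrow> real) \<Rightarrow> (nat \<Rightarrow> nat) \<Rightarrow> bool" where
  "rate_of_divergence_sq \<gamma> \<theta> \<longleftrightarrow> (\<forall>K::nat. (\<Sum>n\<le>\<theta> K. (\<gamma> n)\<^sup>2) \<ge> real K)"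

definition rate_of_convergence :: "(nat \<Rightarrow> 'a::real_normed_vector) \<Rightarrow> 'a \<Rightarrow> (nat \<Rightarrow> nat) \<Rightarrow> bool" where
  "rate_of_convergence a l \<Phi> \<longleftrightarrow> (\<forall>k n. n \<ge> \<Phi> k \<longrightarrow> norm (a n - l) \<le> 1 / (real k + 1))"

definition Psi :: "nat \<Rightarrow> (nat \<Rightarrow> nat) \<Rightarrow> (real \<Rightarrow> real) \<Rightarrow> nat \<Rightarrow> nat" where
  "Psi b \<theta> \<phi> k =
     \<theta> (b\<^sup>2 * (nat \<lceil>2 * real b / \<phi> (1 / (real k + 1))\<rceil> + 1)\<^sup>2) + 1"

end

theory Submission
  imports Defs
begin

lemma norm_add_scale_sq:
  fixes a v :: "'a::real_inner"
  shows "(norm (a + c *\<^sub>R v))\<^sup>2 = (norm a)\<^sup>2 + 2 * c * inner a v + c\<^sup>2 * (norm v)\<^sup>2"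
  unfolding power2_norm_eq_inner
  by (simp add: inner_add_left inner_add_right inner_commute algebra_simps power2_eq_square)

theorem proposition5p2:
  fixes A :: "'a::{real_inner, complete_space} \<Rightarrow> 'a set"
    and \<phi> :: "real \<Rightarrow> real"
    and \<gamma> :: "nat \<Rightarrow> real"
    and \<theta> :: "nat \<Rightarrow> nat"
    and b :: nat
    and p x :: 'a
    and xs :: "nat \<Rightarrow> 'a"
  assumes maxmon: "maximally_monotone A"
    and zer_ne: "zer A \<noteq> {}"
    and phi_mono: "mono_on {0..} \<phi>"
    and phi_nonneg: "\<forall>t\<ge>0. \<phi> t \<ge> 0"
    and phi_zero: "\<forall>t\<ge>0. \<phi> t = 0 \<longleftrightarrow> t = 0"
    and gamma_pos: "\<forall>n. \<gamma> n > 0"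
    and gamma_div: "\<not> summable (\<lambda>n. (\<gamma> n)\<^sup>2)"
    and theta: "rate_of_divergence_sq \<gamma> \<theta>"
    and p_zer: "p \<in> zer A"
    and unif: "uniformly_monotone_on (cball p (real b)) A \<phi>"
    and x_in: "x \<in> cball p (real b)"
    and xs0: "xs 0 = x"
    and xs_step: "\<forall>n. xs (Suc n) \<in> resolvent (\<gamma> n) A (xs n)"
  shows "zer A \<inter> cball p (real b) = {p} \<and> xs \<longlonglongrightarrow> p
         \<and> rate_of_convergence xs p (Psi b \<theta> \<phi>)"
proof -
  have mon: "monotone_op A" using maxmon by (simp add: maximally_monotone_def)
  have p0: "0 \<in> A p" using p_zer by (simp add: zer_def)
  have "\<forall>n. \<exists>u. u \<in> A (xs (Suc n)) \<and> xs n = xs (Suc n) + \<gamma> n *\<^sub>R u"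
    using xs_step by (auto simp: resolvent_def)
  then obtain u where u: "\<And>n. u n \<in> A (xs (Suc n))"
    and ueq: "\<And>n. xs n = xs (Suc n) + \<gamma> n *\<^sub>R u n" by metis
  define d where "d n = norm (xs n - p)" for n
  have dnn: "d n \<ge> 0" for n by (simp add: d_def)
  have inner_nn: "inner (xs (Suc n) - p) (u n) \<ge> 0" for n
    using mon u[of n] p0 unfolding monotone_op_def by (metis diff_zero)
  have key: "(d (Suc n))\<^sup>2 + (\<gamma> n)\<^sup>2 * (norm (u n))\<^sup>2
      + 2 * \<gamma> n * inner (xs (Suc n) - p) (u n) = (d n)\<^sup>2" for n
  proof -
    have "xs n - p = (xs (Suc n) - p) + \<gamma> n *\<^sub>R u n" using ueq[of n] by (simp add: algebra_simps)
    then show ?thesis unfolding d_def using norm_add_scale_sq[of "xs (Suc n) - p" "\<gamma> n" "u n"]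
      by (simp only:)
  qed
  have key2: "(\<gamma> n)\<^sup>2 * (norm (u n))\<^sup>2 \<le> (d n)\<^sup>2 - (d (Suc n))\<^sup>2" for n
    using key[of n] inner_nn[of n] gamma_pos by (smt (verit) mult_nonneg_nonneg)
  have dsuc: "d (Suc n) \<le> d n" for n
  proof -
    have "(d (Suc n))\<^sup>2 \<le> (d n)\<^sup>2" using key2[of n] by (smt (verit) zero_le_power2 mult_nonneg_nonneg)
    then show ?thesis using dnn by (meson power2_le_imp_le)
  qed
  have dec: "m \<le> m' \<Longrightarrow> d m' \<le> d m" for m m'
    using decseqD[OF decseq_SucI[of d]] dsuc by blast
  have db: "d n \<le> real b" for n
    using dec[of 0 n] x_in xs0 by (simp add: d_def dist_norm norm_minus_commute)
  have inC: "xs n \<in> cball p (real b)" for n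
    using db[of n] by (simp add: d_def dist_norm norm_minus_commute)
  have uniq: "zer A \<inter> cball p (real b) = {p}"
  proof
    show "{p} \<subseteq> zer A \<inter> cball p (real b)" using p_zer by simp
    show "zer A \<inter> cball p (real b) \<subseteq> {p}"
    proof
      fix q assume q: "q \<in> zer A \<inter> cball p (real b)"
      then have "\<phi> (norm (q - p)) \<le> inner (q - p) (0 - 0)"
        using unif p0 unfolding uniformly_monotone_on_def zer_def
        by (metis IntD1 IntD2 centre_in_cball mem_Collect_eq of_nat_0_le_iff)
      then have "\<phi> (norm (q - p)) = 0" using phi_nonneg by (simp add: order_antisym)
      then show "q \<in> {p}" using phi_zero by simp
    qed
  qed
  have rate: "rate_of_convergence xs p (Psi b \<theta> \<phi>)"
    unfolding rate_of_convergence_def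
  proof (intro allI impI)
    fix k n assume n: "n \<ge> Psi b \<theta> \<phi> k"
    define e where "e = 1 / (real k + 1)"
    have epos: "e > 0" by (simp add: e_def)
    show "norm (xs n - p) \<le> 1 / (real k + 1)"
    proof (cases "b = 0")
      case True
      then show ?thesis using db[of n] by (simp add: d_def)
    next
      case False
      then have bpos: "real b > 0" by simp
      define c where "c = \<phi> e"
      have cpos: "c > 0" using phi_nonneg phi_zero epos unfolding c_def
        by (metis less_eq_real_def)
      define K where "K = b\<^sup>2 * (nat \<lceil>2 * real b / c\<rceil> + 1)\<^sup>2"
      define N where "N = \<theta> K"
      have PsiN: "Psi b \<theta> \<phi> k = Suc N"
        unfolding Psi_def N_def K_def c_def e_def by simp
      have "\<exists>m\<le>N. d (Suc m) \<le> e"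
      proof (rule ccontr)
        assume "\<not> ?thesis"
        then have big: "\<And>m. m \<le> N \<Longrightarrow> e < d (Suc m)" by force
        have lb: "(\<gamma> m)\<^sup>2 * (c / real b)\<^sup>2 \<le> (d m)\<^sup>2 - (d (Suc m))\<^sup>2" if m: "m \<le> N" for m
        proof -
          have "c \<le> \<phi> (d (Suc m))"
            unfolding c_def using phi_mono big[OF m] epos
            by (intro mono_onD[OF phi_mono]) auto
          also have "\<dots> \<le> inner (xs (Suc m) - p) (u m - 0)"
            using unif inC[of "Suc m"] u[of m] p0 unfolding uniformly_monotone_on_def d_def
            by (metis centre_in_cball of_nat_0_le_iff)
          also have "\<dots> \<le> d (Suc m) * norm (u m)"
            unfolding d_def using norm_cauchy_schwarz by simp
          also have "\<dots> \<le> real b * norm (u m)"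
            using db[of "Suc m"] by (simp add: mult_right_mono)
          finally have "c / real b \<le> norm (u m)" using bpos by (simp add: field_simps)
          then have "(c / real b)\<^sup>2 \<le> (norm (u m))\<^sup>2" using cpos bpos
            by (intro power_mono) auto
          then have "(\<gamma> m)\<^sup>2 * (c / real b)\<^sup>2 \<le> (\<gamma> m)\<^sup>2 * (norm (u m))\<^sup>2"
            by (intro mult_left_mono) auto
          then show ?thesis using key2[of m] by linarith
        qed
        have "(\<Sum>m\<le>N. (\<gamma> m)\<^sup>2) * (c / real b)\<^sup>2 = (\<Sum>m\<le>N. (\<gamma> m)\<^sup>2 * (c / real b)\<^sup>2)"
          by (simp add: sum_distrib_right)
        also have "\<dots> \<le> (\<Sum>m\<le>N. (d m)\<^sup>2 - (d (Suc m))\<^sup>2)"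
          using lb by (intro sum_mono) auto
        also have "\<dots> = (d 0)\<^sup>2 - (d (Suc N))\<^sup>2"
          by (rule sum_telescope)
        also have "\<dots> \<le> (real b)\<^sup>2"
          using db[of 0] dnn[of 0] by (smt (verit) power_mono zero_le_power2)
        finally have S1: "(\<Sum>m\<le>N. (\<gamma> m)\<^sup>2) * (c / real b)\<^sup>2 \<le> (real b)\<^sup>2" .
        have S2: "(\<Sum>m\<le>N. (\<gamma> m)\<^sup>2) \<ge> real K"
          using theta unfolding rate_of_divergence_sq_def N_def by blast
        have "2 * real b / c \<le> real (nat \<lceil>2 * real b / c\<rceil>)"
          by linarith
        then have r1: "2 * real b / c \<le> real (nat \<lceil>2 * real b / c\<rceil>) + 1" by linarith
        have "(2 * real b / c)\<^sup>2 \<le> (real (nat \<lceil>2 * real b / c\<rceil>) + 1)\<^sup>2"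
          using r1 bpos cpos by (intro power_mono) auto
        then have "(real b)\<^sup>2 * (2 * real b / c)\<^sup>2 \<le> real K"
          unfolding K_def by (simp add: add.commute mult_left_mono)
        then have "(real b)\<^sup>2 * (2 * real b / c)\<^sup>2 \<le> (\<Sum>m\<le>N. (\<gamma> m)\<^sup>2)" using S2 by linarith
        then have "(real b)\<^sup>2 * (2 * real b / c)\<^sup>2 * (c / real b)\<^sup>2 \<le> (\<Sum>m\<le>N. (\<gamma> m)\<^sup>2) * (c / real b)\<^sup>2"
          by (intro mult_right_mono) auto
        also have "(real b)\<^sup>2 * (2 * real b / c)\<^sup>2 * (c / real b)\<^sup>2 = 4 * (real b)\<^sup>2"
          using bpos cpos by (simp add: field_simps power2_eq_square)
        finally have "4 * (real b)\<^sup>2 \<le> (real b)\<^sup>2" using S1 by linarith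
        moreover have "(real b)\<^sup>2 > 0" using bpos by simp
        ultimately show False by linarith
      qed
      then obtain m where m: "m \<le> N" "d (Suc m) \<le> e" by blast
      have "d n \<le> d (Suc m)" using dec[of "Suc m" n] m n PsiN by simp
      then show ?thesis using m by (simp add: d_def e_def)
    qed
  qed
  have lim: "xs \<longlonglongrightarrow> p"
  proof (rule LIMSEQ_I)
    fix r :: real assume r: "r > 0"
    obtain k :: nat where k: "1 / r < real k + 1"
      by (metis reals_Archimedean2 add.commute less_add_same_cancel1 order.strict_trans zero_less_one)
    have "1 / (real k + 1) < r" using k r by (simp add: field_simps)
    then show "\<exists>no. \<forall>n\<ge>no. norm (xs n - p) < r"
      using rate unfolding rate_of_convergence_def by (meson order.strict_trans1)
  qed
  show ?thesis using uniq lim rate by blast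
qed

end
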